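(* Let $R$ be a Noetherian integral domain containing $\mathbb{F}_q$, with field of fractions $K$, and let $A\in\mathrm{GL}_n(R)$. Then for every solution $X\in K_{\mathrm{sep}}^n$ of the system $AX^{(q)}=X$, the coordinates of $X$ are integral over $R$.
   Context: $K_{\mathrm{sep}}$ is a separable closure of $K$ (all solutions in an algebraic closure lie there); $X^{(q)}$ denotes the vector obtained by raising each coordinate to the $q$-th power; $\mathrm{GL}_n(R)$ is the group of $n\times n$ matrices over $R$ invertible over $R$. *)

theory Defs
  imports "Jordan_Normal_Form.Matrix" "HOL-Computational_Algebra.Polynomial"
begin

text \<open>R is a subring of the field 'a (hence an integral domain).\<close>
definition subring_of :: "'a::field set \<Rightarrow> bool" where
  "subring_of R \<longleftrightarrow> 0 \<in> R \<and> 1 \<in> R \<and>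
     (\<forall>x\<in>R. \<forall>y\<in>R. x + y \<in> R \<and> x - y \<in> R \<and> x * y \<in> R)"

definition ideal_of :: "'a::field set \<Rightarrow> 'a set \<Rightarrow> bool" where
  "ideal_of R I \<longleftrightarrow> I \<subseteq> R \<and> 0 \<in> I \<and>
     (\<forall>x\<in>I. \<forall>y\<in>I. x + y \<in> I) \<and> (\<forall>r\<in>R. \<forall>x\<in>I. r * x \<in> I)"

definition noetherian_subring :: "'a::field set \<Rightarrow> bool" where
  "noetherian_subring R \<longleftrightarrow> subring_of R \<and>
     (\<forall>I. ideal_of R I \<longrightarrow>
        (\<exists>G. finite G \<and> G \<subseteq> I \<and>
             I = {(\<Sum>g\<in>G. c g * g) | c. \<forall>g\<in>G. c g \<in> R}))"

definition contains_Fq :: "'a::field set \<Rightarrow> nat \<Rightarrow> bool" where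
  "contains_Fq R q \<longleftrightarrow> (\<exists>F. F \<subseteq> R \<and> finite F \<and> card F = q \<and> 0 \<in> F \<and> 1 \<in> F \<and>
     (\<forall>x\<in>F. \<forall>y\<in>F. x + y \<in> F \<and> x - y \<in> F \<and> x * y \<in> F) \<and>
     (\<forall>x\<in>F. x \<noteq> 0 \<longrightarrow> inverse x \<in> F))"

definition frac_field :: "'a::field set \<Rightarrow> 'a set" where
  "frac_field R = {a / b | a b. a \<in> R \<and> b \<in> R \<and> b \<noteq> 0}"

text \<open>x is separable algebraic over K: a root of a nonzero separable polynomial
  with coefficients in K (i.e. x lies in a separable closure of K).\<close>
definition separable_over :: "'a::field set \<Rightarrow> 'a \<Rightarrow> bool" where
  "separable_over K x \<longleftrightarrow> (\<exists>p. p \<noteq> 0 \<and> (\<forall>i. coeff p i \<in> K) \<and> poly p x = 0 \<and>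
       coprime p (pderiv p))"

definition integral_over :: "'a::field set \<Rightarrow> 'a \<Rightarrow> bool" where
  "integral_over R x \<longleftrightarrow> (\<exists>p. lead_coeff p = 1 \<and> (\<forall>i. coeff p i \<in> R) \<and> poly p x = 0)"

definition GL_over :: "nat \<Rightarrow> 'a::field set \<Rightarrow> 'a mat set" where
  "GL_over n R = {A. A \<in> carrier_mat n n \<and> (\<forall>i<n. \<forall>j<n. A $$ (i,j) \<in> R) \<and>
     (\<exists>B \<in> carrier_mat n n. (\<forall>i<n. \<forall>j<n. B $$ (i,j) \<in> R) \<and>
        A * B = 1\<^sub>m n \<and> B * A = 1\<^sub>m n)}"

end

theory Submission imports Defs "Jordan_Normal_Form.Determinant" "Jordan_Normal_Form.Char_Poly" begin

definition sub_ring :: "'a::comm_ring_1 set \<Rightarrow> bool" where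
  "sub_ring R \<longleftrightarrow> 0 \<in> R \<and> 1 \<in> R \<and>
     (\<forall>x\<in>R. \<forall>y\<in>R. x + y \<in> R \<and> x - y \<in> R \<and> x * y \<in> R)"

lemma sub_ring_of: "subring_of R \<Longrightarrow> sub_ring R" by (simp add: subring_of_def sub_ring_def)

lemma sr_neg: "sub_ring R \<Longrightarrow> x \<in> R \<Longrightarrow> - x \<in> R"
  unfolding sub_ring_def by (metis diff_0)

lemma sr_sum: assumes "sub_ring R" "\<And>i. i \<in> I \<Longrightarrow> f i \<in> R" shows "sum f I \<in> R"
  using assms(2)
proof (induction I rule: infinite_finite_induct)
  case (infinite A) then show ?case using assms(1) by (simp add: sub_ring_def)
next case empty then show ?case using assms(1) by (simp add: sub_ring_def)
next case (insert x F) then show ?case using assms(1) by (simp add: sub_ring_def)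
qed

lemma sr_prod: assumes "sub_ring R" "\<And>i. i \<in> I \<Longrightarrow> f i \<in> R" shows "prod f I \<in> R"
  using assms(2)
proof (induction I rule: infinite_finite_induct)
  case (infinite A) then show ?case using assms(1) by (simp add: sub_ring_def)
next case empty then show ?case using assms(1) by (simp add: sub_ring_def)
next case (insert x F) then show ?case using assms(1) by (simp add: sub_ring_def)
qed

definition PR :: "'a::field set \<Rightarrow> 'a poly set" where "PR R = {p. \<forall>i. coeff p i \<in> R}"

lemma PR_sr: assumes "sub_ring R" shows "sub_ring (PR R)"
proof -
  have "0 \<in> PR R" "1 \<in> PR R" using assms by (auto simp: sub_ring_def PR_def coeff_1)
  moreover have "x + y \<in> PR R \<and> x - y \<in> PR R \<and> x * y \<in> PR R" if x: "x \<in> PR R" and y: "y \<in> PR R" for x y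
  proof -
    have "coeff (x * y) i \<in> R" for i unfolding coeff_mult
      apply (rule sr_sum[OF assms]) using x y assms by (auto simp: sub_ring_def PR_def)
    then show ?thesis using x y assms by (auto simp: sub_ring_def PR_def)
  qed
  ultimately show ?thesis unfolding sub_ring_def by blast
qed

lemma det_PR: assumes "sub_ring R" and "M \<in> carrier_mat n n" and "\<And>i j. i < n \<Longrightarrow> j < n \<Longrightarrow> M $$ (i,j) \<in> PR R"
  shows "det M \<in> PR R"
proof -
  have S: "sub_ring (PR R)" by (rule PR_sr[OF assms(1)])
  have sg: "signof p \<in> PR R" for p :: "nat \<Rightarrow> nat"
  proof (cases p rule: sign_cases)
    case even then show ?thesis using S by (simp add: sub_ring_def)
  next
    case odd
    have "- (1::'a poly) \<in> PR R" using S sr_neg by (auto simp: sub_ring_def)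
    then show ?thesis using odd by simp
  qed
  have pr: "(\<Prod>i = 0..<n. M $$ (i, p i)) \<in> PR R" if "p permutes {0..<n}" for p
    apply (rule sr_prod[OF S]) using assms(3) that by (auto simp: permutes_def)
  have "(\<Sum>p\<in>{p. p permutes {0..<n}}. signof p * (\<Prod>i = 0..<n. M $$ (i, p i))) \<in> PR R"
    apply (rule sr_sum[OF S]) using S sg pr by (simp add: sub_ring_def)
  then show ?thesis using assms(2) unfolding det_def by simp
qed

lemma char_poly_PR: assumes "sub_ring R" and "C \<in> carrier_mat n n" and "\<And>i j. i < n \<Longrightarrow> j < n \<Longrightarrow> C $$ (i,j) \<in> R"
  shows "char_poly C \<in> PR R"
  unfolding char_poly_def
  apply (rule det_PR[OF assms(1), of _ n])
  using assms(2) apply simp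
  using assms sr_neg[OF assms(1)] by (auto simp: char_poly_matrix_def PR_def sub_ring_def coeff_pCons split: nat.splits)

lemma integral_from_gens:
  fixes N :: nat and x :: "'a::field"
  assumes R: "sub_ring R" and k0: "k0 < N" "gs k0 \<noteq> 0"
    and cl: "\<forall>k<N. \<exists>c. (\<forall>l. c l \<in> R) \<and> x * gs k = (\<Sum>l<N. c l * gs l)"
  shows "integral_over R x"
proof -
  from cl obtain c where c: "\<And>k. k < N \<Longrightarrow> (\<forall>l. c k l \<in> R) \<and> x * gs k = (\<Sum>l<N. c k l * gs l)"
    by metis
  define C where "C = mat N N (\<lambda>(k,l). c k l)"
  define v where "v = vec N gs"
  have Cc: "C \<in> carrier_mat N N" unfolding C_def by simp
  have "C *\<^sub>v v = x \<cdot>\<^sub>v v"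
  proof (rule eq_vecI)
    fix k assume "k < dim_vec (x \<cdot>\<^sub>v v)"
    then have k: "k < N" by (simp add: v_def)
    have "(C *\<^sub>v v) $ k = (\<Sum>l<N. c k l * gs l)"
      using k unfolding C_def v_def by (simp add: scalar_prod_def lessThan_atLeast0)
    also have "\<dots> = x * gs k" using c[OF k] by simp
    finally show "(C *\<^sub>v v) $ k = (x \<cdot>\<^sub>v v) $ k" using k by (simp add: v_def)
  qed (simp add: C_def v_def)
  moreover have "v \<noteq> 0\<^sub>v N"
  proof
    assume "v = 0\<^sub>v N"
    then have "v $ k0 = 0" using k0 by simp
    then show False using k0 by (simp add: v_def)
  qed
  ultimately have "eigenvector C v x" unfolding eigenvector_def using Cc by (simp add: v_def)
  then have "eigenvalue C x" unfolding eigenvalue_def by blast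
  then have root: "poly (char_poly C) x = 0" using eigenvalue_root_char_poly[OF Cc] by simp
  have "lead_coeff (char_poly C) = 1" using degree_monic_char_poly[OF Cc] by simp
  moreover have "char_poly C \<in> PR R"
    by (rule char_poly_PR[OF R Cc]) (use c in \<open>auto simp: C_def\<close>)
  ultimately show ?thesis unfolding integral_over_def PR_def using root by blast
qed

definition Sp :: "'a::comm_ring_1 set \<Rightarrow> nat \<Rightarrow> (nat \<Rightarrow> 'a) \<Rightarrow> 'a set" where
  "Sp R N g = {y. \<exists>c. (\<forall>k. c k \<in> R) \<and> y = (\<Sum>k<N. c k * g k)}"

lemma Sp_add: assumes "sub_ring R" "a \<in> Sp R N g" "b \<in> Sp R N g" shows "a + b \<in> Sp R N g"
proof -
  from assms(2,3) obtain c d where c: "\<forall>k. c k \<in> R" "a = (\<Sum>k<N. c k * g k)"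
    and d: "\<forall>k. d k \<in> R" "b = (\<Sum>k<N. d k * g k)" unfolding Sp_def by blast
  have "a + b = (\<Sum>k<N. (c k + d k) * g k)" using c d by (simp add: sum.distrib distrib_right)
  moreover have "\<forall>k. c k + d k \<in> R" using c d assms(1) by (simp add: sub_ring_def)
  ultimately show ?thesis unfolding Sp_def by (intro CollectI exI[where x="\<lambda>k. c k + d k"]) auto
qed

lemma Sp_scale: assumes "sub_ring R" "r \<in> R" "a \<in> Sp R N g" shows "r * a \<in> Sp R N g"
proof -
  from assms(3) obtain c where c: "\<forall>k. c k \<in> R" "a = (\<Sum>k<N. c k * g k)" unfolding Sp_def by blast
  have "r * a = (\<Sum>k<N. (r * c k) * g k)" using c by (simp add: sum_distrib_left mult.assoc)
  moreover have "\<forall>k. r * c k \<in> R" using c assms(1,2) by (simp add: sub_ring_def)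
  ultimately show ?thesis unfolding Sp_def by (intro CollectI exI[where x="\<lambda>k. r * c k"]) auto
qed

lemma Sp_sum: assumes "sub_ring R" "\<And>i. i \<in> I \<Longrightarrow> f i \<in> Sp R N g" shows "sum f I \<in> Sp R N g"
  using assms(2)
proof (induction I rule: infinite_finite_induct)
  case (infinite A)
  have "(\<Sum>k<N. 0 * g k) = 0" by simp
  then have "(0::'a) \<in> Sp R N g" unfolding Sp_def using assms(1) by (force simp: sub_ring_def)
  then show ?case using infinite by simp
next
  case empty
  have "(\<Sum>k<N. 0 * g k) = 0" by simp
  then have "(0::'a) \<in> Sp R N g" unfolding Sp_def using assms(1) by (force simp: sub_ring_def)
  then show ?case by simp
next
  case (insert x F) then show ?case using Sp_add[OF assms(1)] by simp
qed

lemma Sp_gen: assumes "sub_ring R" "k < N" shows "g k \<in> Sp R N g"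
proof -
  have "(\<Sum>l<N. (if l = k then 1 else 0) * g l) = (\<Sum>l<N. if l = k then g l else 0)" by (rule sum.cong) auto
  also have "\<dots> = g k" using assms(2) by simp
  finally have "g k = (\<Sum>l<N. (\<lambda>l. if l = k then 1 else 0) l * g l)" by simp
  moreover have "\<forall>l. (\<lambda>l. if l = k then 1 else 0) l \<in> R" using assms(1) by (simp add: sub_ring_def)
  ultimately show ?thesis unfolding Sp_def by (intro CollectI exI[where x="\<lambda>l. if l = k then 1 else 0"]) auto
qed

lemma mono_split: fixes X :: "'a::comm_ring_1 vec" assumes "j < n"
  shows "(\<Prod>i<n. X$i ^ e i) = X$j ^ e j * (\<Prod>i\<in>{..<n}-{j}. X$i ^ e i)"
  using assms by (simp add: prod.remove)

lemma deg_split: assumes "(j::nat) < n"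
  shows "(\<Sum>i<n. (e i::nat)) = e j + (\<Sum>i\<in>{..<n}-{j}. e i)"
  using assms by (simp add: sum.remove)

lemma mono_in_span:
  fixes X :: "'a::field vec" and B :: "'a mat" and es :: "nat \<Rightarrow> nat \<Rightarrow> nat"
  assumes R: "sub_ring R" and q: "2 \<le> q"
    and rel: "\<forall>j<n. X$j ^ q = (\<Sum>l<n. B$$(j,l) * X$l)"
    and Bin: "\<forall>j<n. \<forall>l<n. B$$(j,l) \<in> R"
    and gen: "\<forall>e. (\<forall>i<n. e i < q) \<longrightarrow> (\<exists>k<N. \<forall>i<n. es k i = e i)"
  shows "(\<Prod>i<n. X$i ^ e i) \<in> Sp R N (\<lambda>k. \<Prod>i<n. X$i ^ es k i)"
proof (induction "\<Sum>i<n. e i" arbitrary: e rule: less_induct)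
  case less
  show ?case
  proof (cases "\<forall>i<n. e i < q")
    case True
    then obtain k where k: "k < N" "\<forall>i<n. es k i = e i" using gen by blast
    have "(\<Prod>i<n. X$i ^ e i) = (\<Prod>i<n. X$i ^ es k i)" using k(2) by (intro prod.cong) auto
    then show ?thesis using Sp_gen[OF R k(1)] by simp
  next
    case False
    then obtain j where j: "j < n" "q \<le> e j" by (auto simp: not_less)
    define rest where "rest = (\<Prod>i\<in>{..<n}-{j}. X$i ^ e i)"
    define e' where "e' = e(j := e j - q)"
    have m: "(\<Prod>i<n. X$i ^ e i) = X$j ^ q * (X$j ^ (e j - q) * rest)"
      unfolding mono_split[OF j(1), of X e] rest_def
      using j(2) by (simp add: power_add[symmetric] mult.assoc)
    have tm: "X$l * (X$j ^ (e j - q) * rest) \<in> Sp R N (\<lambda>k. \<Prod>i<n. X$i ^ es k i)" if l: "l < n" for l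
    proof -
      define e2 where "e2 = e'(l := e' l + 1)"
      have rest': "rest = (\<Prod>i\<in>{..<n}-{j}. X$i ^ e' i)" unfolding rest_def e'_def by (intro prod.cong) auto
      have "(\<Prod>i<n. X$i ^ e' i) = X$j ^ (e j - q) * rest"
        unfolding mono_split[OF j(1), of X e'] rest' by (simp add: e'_def)
      moreover have "(\<Prod>i<n. X$i ^ e2 i) = X$l * (\<Prod>i<n. X$i ^ e' i)"
        unfolding e2_def mono_split[OF l, of X "e'(l := e' l + 1)"] mono_split[OF l, of X e']
        by (simp add: mult.assoc)
      moreover have "(\<Sum>i<n. e2 i) < (\<Sum>i<n. e i)"
      proof -
        have a0: "(\<Sum>i\<in>{..<n}-{l}. e2 i) = (\<Sum>i\<in>{..<n}-{l}. e' i)" by (rule sum.cong) (auto simp: e2_def)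
        have a: "(\<Sum>i<n. e2 i) = e2 l + (\<Sum>i\<in>{..<n}-{l}. e' i)"
          using deg_split[OF l, of e2] a0 by simp
        have b: "(\<Sum>i<n. e' i) = e' l + (\<Sum>i\<in>{..<n}-{l}. e' i)" by (rule deg_split[OF l])
        have c0: "(\<Sum>i\<in>{..<n}-{j}. e' i) = (\<Sum>i\<in>{..<n}-{j}. e i)" by (rule sum.cong) (auto simp: e'_def)
        have c: "(\<Sum>i<n. e' i) = e' j + (\<Sum>i\<in>{..<n}-{j}. e i)"
          using deg_split[OF j(1), of e'] c0 by simp
        have d: "(\<Sum>i<n. e i) = e j + (\<Sum>i\<in>{..<n}-{j}. e i)" by (rule deg_split[OF j(1)])
        show ?thesis using a b c d j(2) q by (simp add: e2_def e'_def)
      qed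
      ultimately show ?thesis using less[of e2] by (simp add: mult.assoc)
    qed
    have "(\<Prod>i<n. X$i ^ e i) = (\<Sum>l<n. B$$(j,l) * (X$l * (X$j ^ (e j - q) * rest)))"
      unfolding m using rel j(1) by (simp add: sum_distrib_right mult.assoc)
    also have "\<dots> \<in> Sp R N (\<lambda>k. \<Prod>i<n. X$i ^ es k i)"
      by (rule Sp_sum[OF R]) (use Sp_scale[OF R] Bin j(1) tm in auto)
    finally show ?thesis .
  qed
qed

theorem proposition2p12:
  fixes R :: "'a::field set" and q n :: nat and A :: "'a mat" and X :: "'a vec"
  assumes "noetherian_subring R"
    and "contains_Fq R q"
    and "A \<in> GL_over n R"
    and "X \<in> carrier_vec n"
    and "\<forall>i<n. separable_over (frac_field R) (X $ i)"
    and "A *\<^sub>v map_vec (\<lambda>x. x ^ q) X = X"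
  shows "\<forall>i<n. integral_over R (X $ i)"
proof (intro allI impI)
  fix i0 assume i0: "i0 < n"
  have R: "sub_ring R" using assms(1) sub_ring_of by (auto simp: noetherian_subring_def)
  have q: "2 \<le> q"
  proof -
    from assms(2) obtain F :: "'a set" where F: "finite F" "card F = q" "0 \<in> F" "1 \<in> F"
      unfolding contains_Fq_def by blast
    have "card {0::'a, 1} \<le> card F" using F by (intro card_mono) auto
    then show ?thesis using F by simp
  qed
  from assms(3) obtain B where A: "A \<in> carrier_mat n n" and B: "B \<in> carrier_mat n n"
    and Bin: "\<forall>j<n. \<forall>l<n. B$$(j,l) \<in> R" and BA: "B * A = 1\<^sub>m n"
    unfolding GL_over_def by blast
  define Y where "Y = map_vec (\<lambda>x. x ^ q) X"
  have Y: "Y \<in> carrier_vec n" using assms(4) by (simp add: Y_def)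
  have "B *\<^sub>v X = Y"
  proof -
    have "B *\<^sub>v X = B *\<^sub>v (A *\<^sub>v Y)" using assms(6) by (simp add: Y_def)
    also have "\<dots> = (B * A) *\<^sub>v Y" using A B Y by (simp add: assoc_mult_mat_vec)
    finally show ?thesis using BA Y by simp
  qed
  then have rel: "\<forall>j<n. X$j ^ q = (\<Sum>l<n. B$$(j,l) * X$l)"
  proof (intro allI impI)
    fix j assume BX: "B *\<^sub>v X = Y" and j: "j < n"
    have "X$j ^ q = Y $ j" using j assms(4) by (simp add: Y_def)
    also have "\<dots> = (B *\<^sub>v X) $ j" using BX by simp
    also have "\<dots> = row B j \<bullet> X" using B j by simp
    also have "\<dots> = (\<Sum>l<n. B$$(j,l) * X$l)"
      unfolding scalar_prod_def lessThan_atLeast0 using B assms(4) j by (intro sum.cong) auto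
    finally show "X$j ^ q = (\<Sum>l<n. B$$(j,l) * X$l)" .
  qed
  define E where "E = PiE {..<n} (\<lambda>_. {..<q})"
  have "finite E" unfolding E_def by (simp add: finite_PiE)
  then obtain xs where xs: "set xs = E" using finite_list by blast
  define es where "es k = xs ! k" for k
  define N where "N = length xs"
  have gen: "\<forall>e. (\<forall>i<n. e i < q) \<longrightarrow> (\<exists>k<N. \<forall>i<n. es k i = e i)"
  proof (intro allI impI)
    fix e :: "nat \<Rightarrow> nat" assume "\<forall>i<n. e i < q"
    then have "restrict e {..<n} \<in> E" unfolding E_def by auto
    then obtain k where "k < N" "xs ! k = restrict e {..<n}" using xs unfolding N_def by (metis in_set_conv_nth)
    then show "\<exists>k<N. \<forall>i<n. es k i = e i" unfolding es_def by auto
  qed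
  define gs where "gs = (\<lambda>k. \<Prod>i<n. X$i ^ es k i)"
  have "\<forall>i<n. (\<lambda>_. 0::nat) i < q" using q by simp
  then have "\<exists>k<N. \<forall>i<n. es k i = (\<lambda>_. 0::nat) i" using gen[rule_format, of "\<lambda>_. 0"] q by auto
  then obtain k0 where k0: "k0 < N" "\<forall>i<n. es k0 i = 0" by auto
  have "gs k0 = 1" unfolding gs_def using k0(2) by simp
  then have nz: "gs k0 \<noteq> 0" by simp
  have cl: "\<forall>k<N. \<exists>c. (\<forall>l. c l \<in> R) \<and> X$i0 * gs k = (\<Sum>l<N. c l * gs l)"
  proof (intro allI impI)
    fix k assume "k < N"
    define e where "e = (es k)(i0 := es k i0 + 1)"
    have "(\<Prod>i<n. X$i ^ e i) = X$i0 * gs k"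
      unfolding gs_def e_def mono_split[OF i0, of X "(es k)(i0 := es k i0 + 1)"] mono_split[OF i0, of X "es k"]
      by (simp add: mult.assoc)
    moreover have "(\<Prod>i<n. X$i ^ e i) \<in> Sp R N gs"
      unfolding gs_def by (rule mono_in_span[OF R q rel Bin gen])
    ultimately have "X$i0 * gs k \<in> Sp R N gs" by simp
    then show "\<exists>c. (\<forall>l. c l \<in> R) \<and> X$i0 * gs k = (\<Sum>l<N. c l * gs l)"
      unfolding Sp_def by blast
  qed
  show "integral_over R (X $ i0)" by (rule integral_from_gens[OF R k0(1) nz cl])
qed

end
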